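(* In the setting described in the context, for every $a>0$ the measure $\widetilde{\mu}=h^a_\sharp\mu$ is invariant and satisfies $P_\sharp\widetilde{\mu}_A=P_\sharp\mu_A$; that is, all measures $h^a_\sharp\mu$, $a>0$, yield the same normalized measure $\nu=P_\sharp\mu_A$.
   Context: Let $(\mathcal{X},\Sigma)$ be a measurable space, $\Phi^t$ ($t\in\mathbb{R}$) a flow on $\mathcal{X}$ (bijective measurable maps with $\Phi^{t_1}\circ\Phi^{t_2}=\Phi^{t_1+t_2}$, jointly measurable in $(x,t)$), $f_\sharp$ push-forward, and $\mu$ a probability measure with $\Phi^t_\sharp\mu=\mu$ for all $t$. Let $h^a$, $a>0$, be bijective measurable maps of $\mathcal{X}$ with $h^{a_1}\circ h^{a_2}=h^{a_1a_2}$ and $\Phi^t\circ h^a=h^a\circ\Phi^{t/a}$. A set $\mathcal{Y}\subset\mathcal{X}$ is a representative set if for every $x$ there is a unique $a=A(x)>0$ with $h^a(x)\in\mathcal{Y}$, with $A:\mathcal{X}\to(0,\infty)$ measurable and $\int A\,d\mu<\infty$; the projector is $P(x)=h^{A(x)}(x)$. For a measure $\rho$ and positive measurable $B$ with $0<\int B\,d\rho<\infty$, $\rho_B$ is the probability measure with $d\rho_B/d\rho=B/\int B\,d\rho$. *)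

theory Defs
  imports "HOL-Probability.Probability"
begin

text \<open>The normalized measure rho_B: density B / (integral of B w.r.t. rho).
  It is only meaningful when B is positive and measurable with
  0 < integral B < infinity.\<close>
definition normalized_density :: "'a measure \<Rightarrow> ('a \<Rightarrow> real) \<Rightarrow> 'a measure" where
  "normalized_density \<rho> B = density \<rho> (\<lambda>x. ennreal (B x / integral\<^sup>L \<rho> B))"

end

theory Submission
  imports Defs
begin

theorem proposition2:
  fixes M :: "'a measure"
    and \<Phi> :: "real \<Rightarrow> 'a \<Rightarrow> 'a"
    and h :: "real \<Rightarrow> 'a \<Rightarrow> 'a"
    and Y :: "'a set"
    and A :: "'a \<Rightarrow> real"
    and a :: real
  assumes prob: "prob_space M"
    and flow_bij: "\<And>t. bij_betw (\<Phi> t) (space M) (space M)"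
    and flow_meas: "\<And>t. \<Phi> t \<in> M \<rightarrow>\<^sub>M M"
    and flow_group: "\<And>t1 t2 x. x \<in> space M \<Longrightarrow> \<Phi> t1 (\<Phi> t2 x) = \<Phi> (t1 + t2) x"
    and flow_joint: "(\<lambda>(x, t). \<Phi> t x) \<in> M \<Otimes>\<^sub>M borel \<rightarrow>\<^sub>M M"
    and flow_inv: "\<And>t. distr M M (\<Phi> t) = M"
    and h_bij: "\<And>b. b > 0 \<Longrightarrow> bij_betw (h b) (space M) (space M)"
    and h_meas: "\<And>b. b > 0 \<Longrightarrow> h b \<in> M \<rightarrow>\<^sub>M M"
    and h_group: "\<And>b1 b2 x. b1 > 0 \<Longrightarrow> b2 > 0 \<Longrightarrow> x \<in> space M \<Longrightarrow>
                    h b1 (h b2 x) = h (b1 * b2) x"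
    and h_flow: "\<And>t b x. b > 0 \<Longrightarrow> x \<in> space M \<Longrightarrow> \<Phi> t (h b x) = h b (\<Phi> (t / b) x)"
    and Y_sub: "Y \<subseteq> space M"
    and A_pos: "\<And>x. x \<in> space M \<Longrightarrow> A x > 0"
    and A_rep: "\<And>x. x \<in> space M \<Longrightarrow> h (A x) x \<in> Y"
    and A_unique: "\<And>x b. x \<in> space M \<Longrightarrow> b > 0 \<Longrightarrow> h b x \<in> Y \<Longrightarrow> b = A x"
    and A_meas: "A \<in> borel_measurable M"
    and A_int: "integrable M A"
    and P_meas: "(\<lambda>x. h (A x) x) \<in> M \<rightarrow>\<^sub>M M"
    and a_pos: "a > 0"
  shows "(\<forall>t. distr (distr M M (h a)) M (\<Phi> t) = distr M M (h a))
         \<and> integrable (distr M M (h a)) A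
         \<and> distr (normalized_density (distr M M (h a)) A) M (\<lambda>x. h (A x) x)
           = distr (normalized_density M A) M (\<lambda>x. h (A x) x)"
proof -
  have ha: "h a \<in> M \<rightarrow>\<^sub>M M" using h_meas a_pos by blast
  have hsp: "\<And>x. x \<in> space M \<Longrightarrow> h a x \<in> space M"
    using h_bij[OF a_pos] by (auto simp: bij_betw_def)
  have Aha: "A (h a x) = A x / a" if x: "x \<in> space M" for x
  proof -
    have "h (A (h a x)) (h a x) \<in> Y" using A_rep hsp x by blast
    moreover have "h (A (h a x)) (h a x) = h (A (h a x) * a) x"
      using h_group A_pos hsp x a_pos by blast
    ultimately have "A (h a x) * a = A x"
      using A_unique x A_pos hsp a_pos by (metis mult_pos_pos)
    then show ?thesis using a_pos by (simp add: field_simps)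
  qed
  have P1: "\<forall>t. distr (distr M M (h a)) M (\<Phi> t) = distr M M (h a)"
  proof
    fix t
    have "distr (distr M M (h a)) M (\<Phi> t) = distr M M (\<Phi> t \<circ> h a)"
      using distr_distr[OF flow_meas ha] .
    also have "\<dots> = distr M M (h a \<circ> \<Phi> (t/a))"
      by (rule distr_cong) (auto simp: h_flow a_pos)
    also have "\<dots> = distr (distr M M (\<Phi> (t/a))) M (h a)"
      using distr_distr[OF ha flow_meas] by simp
    also have "\<dots> = distr M M (h a)" using flow_inv by simp
    finally show "distr (distr M M (h a)) M (\<Phi> t) = distr M M (h a)" .
  qed
  have int_eq: "integrable (distr M M (h a)) A \<longleftrightarrow> integrable M (\<lambda>x. A (h a x))"
    using integrable_distr_eq[OF ha A_meas] .
  have "integrable M (\<lambda>x. A x / a)" using A_int by simp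
  then have intA: "integrable M (\<lambda>x. A (h a x))"
  proof -
    have "integrable M (\<lambda>x. A (h a x)) \<longleftrightarrow> integrable M (\<lambda>x. A x / a)"
      by (rule Bochner_Integration.integrable_cong) (auto simp: Aha)
    then show ?thesis using \<open>integrable M (\<lambda>x. A x / a)\<close> by simp
  qed
  have P2: "integrable (distr M M (h a)) A" using int_eq intA by simp
  define c where "c = integral\<^sup>L M A"
  have c': "integral\<^sup>L (distr M M (h a)) A = c / a"
  proof -
    have "integral\<^sup>L (distr M M (h a)) A = integral\<^sup>L M (\<lambda>x. A (h a x))"
      using integral_distr[OF ha A_meas] .
    also have "\<dots> = integral\<^sup>L M (\<lambda>x. A x / a)"
      by (rule Bochner_Integration.integral_cong) (auto simp: Aha)
    also have "\<dots> = c / a" by (simp add: c_def)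
    finally show ?thesis .
  qed
  have fmeas: "(\<lambda>x. ennreal (A x / (c / a))) \<in> borel_measurable M"
    using A_meas by measurable
  have "distr (normalized_density (distr M M (h a)) A) M (\<lambda>x. h (A x) x)
      = distr (density (distr M M (h a)) (\<lambda>x. ennreal (A x / (c / a)))) M (\<lambda>x. h (A x) x)"
    unfolding normalized_density_def c' ..
  also have "\<dots> = distr (distr (density M (\<lambda>x. ennreal (A (h a x) / (c / a)))) M (h a)) M (\<lambda>x. h (A x) x)"
    using density_distr[OF fmeas ha] by simp
  also have "\<dots> = distr (density M (\<lambda>x. ennreal (A (h a x) / (c / a)))) M ((\<lambda>x. h (A x) x) \<circ> h a)"
    by (rule distr_distr[OF P_meas]) (simp add: ha)
  also have "\<dots> = distr (density M (\<lambda>x. ennreal (A x / c))) M (\<lambda>x. h (A x) x)"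
  proof -
    have "density M (\<lambda>x. ennreal (A (h a x) / (c / a))) = density M (\<lambda>x. ennreal (A x / c))"
    proof (rule density_cong)
      show "(\<lambda>x. ennreal (A (h a x) / (c / a))) \<in> borel_measurable M"
        using ha A_meas by measurable
      show "(\<lambda>x. ennreal (A x / c)) \<in> borel_measurable M"
        using A_meas by measurable
      have "\<And>x. x \<in> space M \<Longrightarrow> A (h a x) / (c / a) = A x / c"
        using Aha a_pos by simp
      then show "AE x in M. ennreal (A (h a x) / (c / a)) = ennreal (A x / c)"
        by (intro AE_I2) presburger
    qed
    moreover have "\<And>x. x \<in> space M \<Longrightarrow> ((\<lambda>x. h (A x) x) \<circ> h a) x = h (A x) x"
    proof -
      fix x assume x: "x \<in> space M"
      have "h (A x / a) (h a x) = h (A x / a * a) x"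
        using h_group A_pos x a_pos by simp
      then show "((\<lambda>x. h (A x) x) \<circ> h a) x = h (A x) x" using Aha[OF x] a_pos by simp
    qed
    ultimately show ?thesis by (intro distr_cong) auto
  qed
  also have "\<dots> = distr (normalized_density M A) M (\<lambda>x. h (A x) x)"
    unfolding normalized_density_def c_def ..
  finally show ?thesis using P1 P2 by blast
qed

end
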